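(* Let $\mathcal{M}_1$ be the set of real symmetric $2\times2$ matrices $\mathbf{V}$ with $\mathbf{V}+\tfrac{i}{2}\mathbf{\Omega}>0$, where $\mathbf{\Omega}=\begin{pmatrix}0&1\\-1&0\end{pmatrix}$, equipped with the Riemannian metric $$G_{\mathbf{V}}(\mathbf{A},\mathbf{B})=\int_{-1}^{1}d\lambda\;\mathrm{Tr}\Big[\mathbf{B}\,(2\mathbf{V}+i\lambda\mathbf{\Omega})^{-1}\mathbf{A}\,(2\mathbf{V}+i\lambda\mathbf{\Omega})^{-1}\Big],$$ and let $\mathrm{Scal}(\mathbf{V})$ denote the scalar curvature of $(\mathcal{M}_1,G)$ at $\mathbf{V}$. For $\mathbf{V}\in\mathcal{M}_1$ with symplectic eigenvalue $\nu=\sqrt{\det\mathbf{V}}>1/2$, let $$S_{vN}(\mathbf{V})=\Big(\nu+\tfrac12\Big)\log_2\Big(\nu+\tfrac12\Big)-\Big(\nu-\tfrac12\Big)\log_2\Big(\nu-\tfrac12\Big)$$ be the von Neumann entropy of the corresponding single-mode Gaussian state. Then for all $\mathbf{V},\mathbf{V}'\in\mathcal{M}_1$, $$\mathrm{Scal}(\mathbf{V}')>\mathrm{Scal}(\mathbf{V})\iff S_{vN}(\mathbf{V}')>S_{vN}(\mathbf{V}).$$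
   Context: $\mathcal{M}_1$ parametrizes (via covariance matrices) the faithful zero-displacement single-mode bosonic Gaussian states; it is an open subset of the 3-dimensional space of real symmetric $2\times2$ matrices, with tangent spaces identified with that space, and $G$ is the Kubo-Mori-Bogoliubov metric. The scalar curvature is the usual Riemannian scalar curvature of $G$. For a single mode the symplectic eigenvalue $\nu$ of $\mathbf{V}$ (defined by $\mathbf{V}=\mathbf{S}\,\mathrm{diag}(\nu,\nu)\mathbf{S}^T$ with $\mathbf{S}\mathbf{\Omega}\mathbf{S}^T=\mathbf{\Omega}$) equals $\sqrt{\det\mathbf{V}}$. *)

theory Defs
  imports "HOL-Analysis.Analysis"
begin

definition Omega :: "real^2^2" where
  "Omega = vector [vector [0, 1], vector [-1, 0]]"

definition cmat :: "real^2^2 \<Rightarrow> complex^2^2" where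
  "cmat M = (\<chi> i j. complex_of_real (M$i$j))"

definition pos_def_herm :: "complex^2^2 \<Rightarrow> bool" where
  "pos_def_herm M \<longleftrightarrow> (\<forall>z::complex^2. z \<noteq> 0 \<longrightarrow>
      (let q = (\<Sum>i\<in>UNIV. \<Sum>j\<in>UNIV. cnj (z$i) * M$i$j * z$j) in Im q = 0 \<and> Re q > 0))"

definition M1 :: "(real^2^2) set" where
  "M1 = {V. transpose V = V \<and>
           pos_def_herm (\<chi> i j. complex_of_real (V$i$j) + (\<i>/2) * complex_of_real (Omega$i$j))}"

definition KMB_mat :: "real^2^2 \<Rightarrow> real \<Rightarrow> complex^2^2" where
  "KMB_mat V l = (\<chi> i j. 2 * complex_of_real (V$i$j) + \<i> * complex_of_real l * complex_of_real (Omega$i$j))"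

text \<open>Kubo-Mori-Bogoliubov metric G_V(A,B) (the integral is real; we take its real part).\<close>
definition KMB :: "real^2^2 \<Rightarrow> real^2^2 \<Rightarrow> real^2^2 \<Rightarrow> real" where
  "KMB V A B = Re (integral {-1..1::real}
      (\<lambda>l. trace (cmat B ** matrix_inv (KMB_mat V l) ** cmat A ** matrix_inv (KMB_mat V l))))"

definition sym_of_coords :: "real^3 \<Rightarrow> real^2^2" where
  "sym_of_coords x = vector [vector [x$1, x$2], vector [x$2, x$3]]"

definition coords_of_sym :: "real^2^2 \<Rightarrow> real^3" where
  "coords_of_sym V = vector [V$1$1, V$1$2, V$2$2]"

definition gco :: "real^3 \<Rightarrow> 3 \<Rightarrow> 3 \<Rightarrow> real" where
  "gco x i j = KMB (sym_of_coords x) (sym_of_coords (axis i 1)) (sym_of_coords (axis j 1))"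

definition ginv :: "real^3 \<Rightarrow> real^3^3" where
  "ginv x = matrix_inv (\<chi> i j. gco x i j)"

definition pd :: "(real^3 \<Rightarrow> real) \<Rightarrow> 3 \<Rightarrow> real^3 \<Rightarrow> real" where
  "pd f i x = deriv (\<lambda>t. f (x + t *\<^sub>R axis i 1)) 0"

definition Chr :: "real^3 \<Rightarrow> 3 \<Rightarrow> 3 \<Rightarrow> 3 \<Rightarrow> real" where
  "Chr x k i j = (1/2) * (\<Sum>l\<in>UNIV. ginv x $k$l *
      (pd (\<lambda>y. gco y j l) i x + pd (\<lambda>y. gco y i l) j x - pd (\<lambda>y. gco y i j) l x))"

definition Riem :: "real^3 \<Rightarrow> 3 \<Rightarrow> 3 \<Rightarrow> 3 \<Rightarrow> 3 \<Rightarrow> real" where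
  "Riem x r s m n = pd (\<lambda>y. Chr y r n s) m x - pd (\<lambda>y. Chr y r m s) n x
      + (\<Sum>l\<in>UNIV. Chr x r m l * Chr x l n s - Chr x r n l * Chr x l m s)"

definition Ric :: "real^3 \<Rightarrow> 3 \<Rightarrow> 3 \<Rightarrow> real" where
  "Ric x s n = (\<Sum>r\<in>UNIV. Riem x r s r n)"

definition scal_coords :: "real^3 \<Rightarrow> real" where
  "scal_coords x = (\<Sum>s\<in>UNIV. \<Sum>n\<in>UNIV. ginv x $s$n * Ric x s n)"

definition Scal :: "real^2^2 \<Rightarrow> real" where
  "Scal V = scal_coords (coords_of_sym V)"

definition S_vN :: "real^2^2 \<Rightarrow> real" where
  "S_vN V = (let \<nu> = sqrt (det V) in
     (\<nu> + 1/2) * log 2 (\<nu> + 1/2) - (\<nu> - 1/2) * log 2 (\<nu> - 1/2))"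

end

theory Submission
  imports Defs
begin

lemma matrix_inv_eq:
  fixes A B :: "'a::semiring_1^'n^'n"
  assumes "A ** B = mat 1" "B ** A = mat 1"
  shows "matrix_inv A = B"
proof -
  have ex: "\<exists>A'. A ** A' = mat 1 \<and> A' ** A = mat 1" using assms by blast
  define C where "C = matrix_inv A"
  have C: "A ** C = mat 1 \<and> C ** A = mat 1" unfolding C_def matrix_inv_def by (rule someI_ex[OF ex])
  have "C = C ** (A ** B)" using assms by (simp add: matrix_mul_rid)
  also have "\<dots> = (C ** A) ** B" by (simp add: matrix_mul_assoc)
  also have "\<dots> = B" using C by (simp add: matrix_mul_lid)
  finally show ?thesis unfolding C_def .
qed

lemma t: "(1::3) \<noteq> 2 \<and> (1::3) \<noteq> 3 \<and> (2::3) \<noteq> 3" by simp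

definition Kinv :: "real \<Rightarrow> real \<Rightarrow> real \<Rightarrow> real \<Rightarrow> complex^2^2" where
 "Kinv a b c l = (let dd = 4*(a*c - b^2) - l^2 in
    vector [vector [of_real (2*c/dd), - of_real (2*b/dd) - \<i> * of_real (l/dd)],
            vector [- of_real (2*b/dd) + \<i> * of_real (l/dd), of_real (2*a/dd)]])"

lemma KMB_mat_sym: "KMB_mat (sym_of_coords x) l = vector [vector [2* of_real (x$1), 2* of_real (x$2) + \<i> * of_real l],
   vector [2* of_real (x$2) - \<i> * of_real l, 2 * of_real (x$3)]]"
  unfolding KMB_mat_def sym_of_coords_def Omega_def
  by (simp add: vec_eq_iff forall_2 vector_def)

lemma Kinv_ok:
  assumes "4*(x$1*x$3 - (x$2)^2) - l^2 \<noteq> 0"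
  shows "matrix_inv (KMB_mat (sym_of_coords x) l) = Kinv (x$1) (x$2) (x$3) l"
proof (rule matrix_inv_eq)
  define dd where "dd = 4*(x$1*x$3 - (x$2)^2) - l^2"
  have dd: "dd \<noteq> 0" using assms dd_def by simp
  show "KMB_mat (sym_of_coords x) l ** Kinv (x $ 1) (x $ 2) (x $ 3) l = mat 1"
    unfolding KMB_mat_sym Kinv_def Let_def dd_def[symmetric]
    using dd
    apply (simp add: vec_eq_iff forall_2 matrix_matrix_mult_def sum_2 mat_def complex_eq_iff)
    apply (simp add: field_simps)
    apply (simp add: dd_def algebra_simps power2_eq_square)
    done
  show "Kinv (x $ 1) (x $ 2) (x $ 3) l ** KMB_mat (sym_of_coords x) l = mat 1"
    unfolding KMB_mat_sym Kinv_def Let_def dd_def[symmetric]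
    using dd
    apply (simp add: vec_eq_iff forall_2 matrix_matrix_mult_def sum_2 mat_def complex_eq_iff)
    apply (simp add: field_simps)
    apply (simp add: dd_def algebra_simps power2_eq_square)
    done
qed

definition Dq :: "real^3 \<Rightarrow> real" where "Dq x = x$1 * x$3 - (x$2)^2"
definition uv :: "real^3 \<Rightarrow> real^3 \<Rightarrow> real" where "uv x y = x$3 * y$1 - 2 * x$2 * y$2 + x$1 * y$3"
definition etab :: "real^3 \<Rightarrow> real^3 \<Rightarrow> real" where "etab y z = y$1 * z$3 + y$3 * z$1 - 2 * y$2 * z$2"

definition Ks :: "real \<Rightarrow> real \<Rightarrow> real \<Rightarrow> real \<Rightarrow> real \<Rightarrow> complex^2^2" where
 "Ks s a b c l = vector [vector [of_real s * (2 * of_real c), of_real s * (- (2 * of_real b) - \<i> * of_real l)],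
            vector [of_real s * (- (2 * of_real b) + \<i> * of_real l), of_real s * (2 * of_real a)]]"

lemma Re_Ks:
  "Re (trace (cmat (sym_of_coords z) ** Ks s (x$1) (x$2) (x$3) l ** cmat (sym_of_coords y) ** Ks s (x$1) (x$2) (x$3) l))
     = s^2 * (4 * (uv x y * uv x z - Dq x * etab y z) + etab y z * l^2)"
  unfolding Ks_def cmat_def sym_of_coords_def trace_def
  apply (simp add: sum_2 matrix_matrix_mult_def vector_def)
  apply (simp add: uv_def etab_def Dq_def algebra_simps power2_eq_square)
  done

definition Lc :: "real \<Rightarrow> real" where "Lc cc = ln (cc+1) - ln (cc-1)"
definition I0 :: "real \<Rightarrow> real" where "I0 cc = 1/(cc^2*(cc^2-1)) + Lc cc/(2*cc^3)"
definition I2 :: "real \<Rightarrow> real" where "I2 cc = cc^2 * I0 cc - Lc cc / cc"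

definition A0 :: "real \<Rightarrow> real \<Rightarrow> real" where
  "A0 cc l = l/(2*cc^2*(cc^2-l^2)) + (ln (cc+l) - ln (cc-l))/(4*cc^3)"

lemma sqdiff_ne: assumes "cc + l > 0" "cc - l > 0" shows "cc^2 - l^2 \<noteq> (0::real)"
proof -
  have "cc^2 - l^2 = (cc+l)*(cc-l)" by (simp add: power2_eq_square algebra_simps)
  thus ?thesis using assms by simp
qed

lemma Lg_deriv:
  assumes "cc > 1" "l \<in> {-1..1}"
  shows "((\<lambda>l. ln (cc+l) - ln (cc-l)) has_real_derivative 2*cc/(cc^2-l^2)) (at l)"
proof -
  have p1: "cc + l > 0" "cc - l > 0" using assms by auto
  have p2: "cc^2 - l^2 \<noteq> 0" using sqdiff_ne p1 by blast
  have "((\<lambda>l. ln (cc+l) - ln (cc-l)) has_real_derivative 1/(cc+l) - (-1)/(cc-l)) (at l)"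
    using p1 by (auto intro!: derivative_eq_intros)
  moreover have "1/(cc+l) - (-1)/(cc-l) = 2*cc/(cc^2-l^2)"
    using p1 p2 by (simp add: field_simps power2_eq_square)
  ultimately show ?thesis by simp
qed

lemma A0_deriv:
  assumes "cc > 1" "l \<in> {-1..1}"
  shows "(A0 cc has_real_derivative 1/(cc^2-l^2)^2) (at l)"
proof -
  have p1: "cc + l > 0" "cc - l > 0" using assms by auto
  have p2: "cc^2 - l^2 \<noteq> 0" using sqdiff_ne p1 by blast
  have p3: "cc \<noteq> 0" using assms by simp
  have a: "((\<lambda>l. l/(2*cc^2*(cc^2-l^2))) has_real_derivative (2*cc^2*(cc^2-l^2) + l*(2*cc^2*(2*l)))/(2*cc^2*(cc^2-l^2))^2) (at l)"
    using p2 p3 by (auto intro!: derivative_eq_intros simp: power2_eq_square)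
  have b: "((\<lambda>l. (ln (cc+l) - ln (cc-l))/(4*cc^3)) has_real_derivative (2*cc/(cc^2-l^2))/(4*cc^3)) (at l)"
    by (rule DERIV_cdivide[OF Lg_deriv[OF assms]])
  have "(A0 cc has_real_derivative (2*cc^2*(cc^2-l^2) + l*(2*cc^2*(2*l)))/(2*cc^2*(cc^2-l^2))^2 + (2*cc/(cc^2-l^2))/(4*cc^3)) (at l)"
    unfolding A0_def[abs_def] by (rule DERIV_add[OF a b])
  moreover have "(2*cc^2*(cc^2-l^2) + l*(2*cc^2*(2*l)))/(2*cc^2*(cc^2-l^2))^2 + (2*cc/(cc^2-l^2))/(4*cc^3) = 1/(cc^2-l^2)^2"
  proof -
    define w where "w = cc^2 - l^2"
    have l2: "l*l = cc^2 - w" unfolding w_def by (simp add: power2_eq_square)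
    have "w \<noteq> 0" using p2 w_def by simp
    hence "(2*cc^2*w + 4*cc^2*(l*l))/(2*cc^2*w)^2 + (2*cc/w)/(4*cc^3) = 1/w^2"
      unfolding l2 using p3 by (simp add: field_simps power2_eq_square power3_eq_cube)
    moreover have e: "l*(2*cc^2*(2*l)) = 4*cc^2*(l*l)" by (simp add: algebra_simps)
    ultimately show ?thesis unfolding e w_def by simp
  qed
  ultimately show ?thesis by simp
qed

lemma I_int:
  assumes "cc > 1"
  shows "((\<lambda>l. (T + E * l^2) / (cc^2 - l^2)^2) has_integral (T * I0 cc + E * I2 cc)) {-1..1}"
proof -
  define F where "F l = (T + E*cc^2) * A0 cc l - E * (ln (cc+l) - ln (cc-l)) / (2*cc)" for l
  have d: "(F has_real_derivative (T + E * l^2) / (cc^2 - l^2)^2) (at l)" if "l \<in> {-1..1}" for l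
  proof -
    have p1: "cc + l > 0" "cc - l > 0" using assms that by auto
    have p2: "cc^2 - l^2 \<noteq> 0" using sqdiff_ne p1 by blast
    have p3: "cc \<noteq> 0" using assms by simp
    have a: "((\<lambda>z. (T + E*cc^2) * A0 cc z) has_real_derivative (T + E*cc^2) * (1/(cc^2-l^2)^2)) (at l)"
      by (rule DERIV_cmult[OF A0_deriv[OF assms that]])
    have b: "((\<lambda>z. E * (ln (cc+z) - ln (cc-z)) / (2*cc)) has_real_derivative E * (2*cc/(cc^2-l^2)) / (2*cc)) (at l)"
      by (rule DERIV_cdivide[OF DERIV_cmult[OF Lg_deriv[OF assms that]]])
    have "(F has_real_derivative (T + E*cc^2) * (1/(cc^2-l^2)^2) - E * (2*cc/(cc^2-l^2)) / (2*cc)) (at l)"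
      unfolding F_def[abs_def] by (rule DERIV_diff[OF a b])
    moreover have "(T + E*cc^2) * (1/(cc^2-l^2)^2) - E * (2*cc/(cc^2-l^2)) / (2*cc) = (T + E * l^2) / (cc^2 - l^2)^2"
    proof -
      define w where "w = cc^2 - l^2"
      have l2: "l^2 = cc^2 - w" unfolding w_def by simp
      have "w \<noteq> 0" using p2 w_def by simp
      hence "(T + E*cc^2) * (1/w^2) - E * (2*cc/w) / (2*cc) = (T + E * (cc^2 - w)) / w^2"
        using p3 by (simp add: field_simps power2_eq_square)
      thus ?thesis unfolding w_def by simp
    qed
    ultimately show ?thesis by simp
  qed
  have "((\<lambda>l. (T + E * l^2) / (cc^2 - l^2)^2) has_integral (F 1 - F (-1))) {-1..1}"
    apply (rule fundamental_theorem_of_calculus)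
     apply simp
    using d by (simp add: has_real_derivative_iff_has_vector_derivative[symmetric] has_field_derivative_at_within)
  moreover have "F 1 - F (-1) = T * I0 cc + E * I2 cc"
  proof -
    have "cc*cc > 1*1" using assms by (intro mult_strict_mono) auto
    hence m: "cc^2 - 1 \<noteq> 0" by (simp add: power2_eq_square)
    have c: "cc \<noteq> 0" using assms by simp
    have e: "cc + -1 = cc - 1" "cc - -1 = cc + 1" "(-1::real)^2 = 1" by simp_all
    define mm where "mm = cc^2 - 1"
    define L1 where "L1 = ln (cc+1)"
    define L2 where "L2 = ln (cc-1)"
    have f1: "F 1 = (T + E*cc^2) * (1/(2*cc^2*mm) + (L1 - L2)/(4*cc^3)) - E*(L1-L2)/(2*cc)"
      unfolding F_def A0_def mm_def L1_def L2_def by simp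
    have f2: "F (-1) = (T + E*cc^2) * (-1/(2*cc^2*mm) + (L2 - L1)/(4*cc^3)) - E*(L2-L1)/(2*cc)"
      unfolding F_def A0_def mm_def L1_def L2_def by simp
    have i0: "I0 cc = 1/(cc^2*mm) + (L1-L2)/(2*cc^3)"
      unfolding I0_def Lc_def mm_def L1_def L2_def by simp
    have i2: "I2 cc = cc^2*I0 cc - (L1-L2)/cc"
      unfolding I2_def Lc_def L1_def L2_def by simp
    have mm: "mm \<noteq> 0" using m mm_def by simp
    show ?thesis unfolding f1 f2 i2 i0
      using mm c by (simp add: field_simps)
  qed
  ultimately show ?thesis by simp
qed

lemma Kinv_Ks: "Kinv a b c l = Ks (1/(4*(a*c-b^2)-l^2)) a b c l"
  unfolding Kinv_def Ks_def Let_def by (simp add: diff_divide_distrib)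

lemma cont_g0:
  assumes "continuous_on S s"
  shows "continuous_on S (\<lambda>l. trace (cmat (sym_of_coords z) ** Ks (s l) (x$1) (x$2) (x$3) l ** cmat (sym_of_coords y) ** Ks (s l) (x$1) (x$2) (x$3) l))"
  unfolding Ks_def trace_def matrix_matrix_mult_def cmat_def sym_of_coords_def
  apply (simp add: sum_2 vector_def)
  apply (intro continuous_intros assms)
  done

lemma cont_g:
  assumes "\<And>l. l \<in> S \<Longrightarrow> 4 * Dq x - l^2 \<noteq> 0"
  shows "continuous_on S (\<lambda>l. trace (cmat (sym_of_coords z) ** Ks (1/(4 * Dq x - l^2)) (x$1) (x$2) (x$3) l ** cmat (sym_of_coords y) ** Ks (1/(4 * Dq x - l^2)) (x$1) (x$2) (x$3) l))"
  apply (rule cont_g0)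
  apply (intro continuous_intros)
  using assms by auto

lemma KMB_closed:
  assumes D: "Dq x > 1/4"
  shows "KMB (sym_of_coords x) (sym_of_coords y) (sym_of_coords z) =
     4*(uv x y * uv x z - Dq x * etab y z) * I0 (2* sqrt(Dq x)) + etab y z * I2 (2* sqrt(Dq x))"
proof -
  define cc where "cc = 2* sqrt(Dq x)"
  have "1/2 < sqrt (Dq x)" using D by (intro real_less_rsqrt) (simp add: power2_eq_square)
  hence cc1: "cc > 1" unfolding cc_def by simp
  have cc2: "cc^2 = 4 * Dq x" unfolding cc_def using D by (simp add: power_mult_distrib)
  define T where "T = 4*(uv x y * uv x z - Dq x * etab y z)"
  define E where "E = etab y z"
  define f where "f l = trace (cmat (sym_of_coords z) ** matrix_inv (KMB_mat (sym_of_coords x) l) ** cmat (sym_of_coords y) ** matrix_inv (KMB_mat (sym_of_coords x) l))" for l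
  define g where "g l = trace (cmat (sym_of_coords z) ** Ks (1/(4 * Dq x - l^2)) (x$1) (x$2) (x$3) l ** cmat (sym_of_coords y) ** Ks (1/(4 * Dq x - l^2)) (x$1) (x$2) (x$3) l)" for l
  have nz: "4 * Dq x - l^2 \<noteq> 0" if "l \<in> {-1..1}" for l
  proof -
    have "l^2 \<le> 1" using that by (auto simp: abs_square_le_1)
    thus ?thesis using D by simp
  qed
  have fg: "f l = g l" if "l \<in> {-1..1}" for l
  proof -
    have "4*(x$1*x$3 - (x$2)^2) - l^2 \<noteq> 0" using nz[OF that] unfolding Dq_def .
    hence "matrix_inv (KMB_mat (sym_of_coords x) l) = Ks (1/(4 * Dq x - l^2)) (x$1) (x$2) (x$3) l"
      using Kinv_ok Kinv_Ks Dq_def by metis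
    thus ?thesis unfolding f_def g_def by simp
  qed
  have cg: "continuous_on {-1..1} g" unfolding g_def by (rule cont_g) (use nz in auto)
  have gi: "(g has_integral integral {-1..1} g) {-1..1}"
    using integrable_continuous_interval[OF cg] by (simp add: has_integral_integral)
  have rg: "((Re \<circ> g) has_integral Re (integral {-1..1} g)) {-1..1}"
    by (rule has_integral_linear[OF gi bounded_linear_Re])
  have reg: "(Re \<circ> g) l = (T + E * l^2) / (cc^2 - l^2)^2" if "l \<in> {-1..1}" for l
  proof -
    have "(Re \<circ> g) l = (1/(4 * Dq x - l^2))^2 * (T + E * l^2)"
      unfolding g_def o_def Re_Ks T_def E_def by simp
    thus ?thesis unfolding cc2 by (simp add: power_divide)
  qed
  have r2: "((Re \<circ> g) has_integral (T * I0 cc + E * I2 cc)) {-1..1}"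
    using I_int[OF cc1, of T E] reg by (metis (no_types, lifting) has_integral_cong)
  have "Re (integral {-1..1} g) = T * I0 cc + E * I2 cc"
    using rg r2 has_integral_unique by blast
  moreover have "integral {-1..1} f = integral {-1..1} g"
    using fg by (rule integral_cong)
  ultimately have "Re (integral {-1..1} f) = T * I0 cc + E * I2 cc" by simp
  thus ?thesis unfolding KMB_def f_def T_def E_def cc_def by simp
qed

definition eta :: "3 \<Rightarrow> 3 \<Rightarrow> real" where
  "eta i j = (if (i = 1 \<and> j = 3) \<or> (i = 3 \<and> j = 1) then 1 else if i = 2 \<and> j = 2 then -2 else 0)"
definition etai :: "3 \<Rightarrow> 3 \<Rightarrow> real" where
  "etai i j = (if (i = 1 \<and> j = 3) \<or> (i = 3 \<and> j = 1) then 1 else if i = 2 \<and> j = 2 then -1/2 else 0)"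
definition dl :: "3 \<Rightarrow> 3 \<Rightarrow> real" where "dl i j = (if i = j then 1 else 0)"
definition uu :: "real^3 \<Rightarrow> 3 \<Rightarrow> real" where
  "uu x i = (if i = 1 then x$3 else if i = 2 then -2 * x$2 else x$1)"
definition nu :: "real^3 \<Rightarrow> real" where "nu x = sqrt (Dq x)"

definition Lf :: "real \<Rightarrow> real" where "Lf v = ln (2* v+1) - ln (2* v-1)"
definition Pf :: "real \<Rightarrow> real" where "Pf v = - Lf v / (2* v)"
definition Qf :: "real \<Rightarrow> real" where "Qf v = 1/(v^2*(4* v^2-1)) + Lf v/(4* v^3)"

lemma uv_axis: "uv x (axis i 1) = uu x i"
  using exhaust_3[of i] by (auto simp: uv_def uu_def axis_def)

lemma etab_axis: "etab (axis i 1) (axis j 1) = eta i j"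
  using exhaust_3[of i] exhaust_3[of j] by (auto simp: etab_def eta_def axis_def)

lemma gco_closed:
  assumes D: "Dq x > 1/4"
  shows "gco x i j = Pf (nu x) * eta i j + Qf (nu x) * uu x i * uu x j"
proof -
  define v where "v = nu x"
  have v2: "v^2 = Dq x" unfolding v_def nu_def using D by simp
  have "1/2 < v" unfolding v_def nu_def using D by (intro real_less_rsqrt) (simp add: power2_eq_square)
  hence v0: "v \<noteq> 0" by simp
  have "v * v > (1/2) * (1/2)" using \<open>1/2 < v\<close> by (intro mult_strict_mono) auto
  hence k0: "4 * v^2 - 1 \<noteq> 0" by (simp add: power2_eq_square)
  have cc: "2 * sqrt (Dq x) = 2 * v" unfolding v_def nu_def ..
  have L: "Lc (2* v) = Lf v" unfolding Lc_def Lf_def by simp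
  have "gco x i j = 4*(uu x i * uu x j - v^2 * eta i j) * I0 (2* v) + eta i j * I2 (2* v)"
    unfolding gco_def KMB_closed[OF D] uv_axis etab_axis cc v2 ..
  also have "\<dots> = Pf v * eta i j + Qf v * uu x i * uu x j"
  proof -
    define k where "k = 4 * v^2 - 1"
    have kk: "k \<noteq> 0" using k0 k_def by simp
    have i0: "I0 (2 * v) = 1/(4 * v^2 * k) + Lf v/(16 * v^3)"
      unfolding I0_def L k_def by (simp add: power_mult_distrib)
    have i2: "I2 (2 * v) = 4 * v^2 * I0 (2 * v) - Lf v/(2 * v)"
      unfolding I2_def L by (simp add: power_mult_distrib)
    have q: "Qf v = 1/(v^2 * k) + Lf v/(4 * v^3)" unfolding Qf_def k_def ..
    show ?thesis unfolding i2 i0 q Pf_def using v0 kk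
      by (simp add: field_simps)
  qed
  finally show ?thesis unfolding v_def .
qed

definition Q1f :: "real \<Rightarrow> real" where
  "Q1f v = - (20 * v^2 - 3)/(2 * v^4 * (4 * v^2 - 1)^2) - 3 * Lf v/(8 * v^5)"
definition Q2f :: "real \<Rightarrow> real" where
  "Q2f v = (240 * v^4 - 68 * v^2 + 6)/(2 * v^6 * (4 * v^2 - 1)^3) + 3/(4 * v^6 * (4 * v^2 - 1)) + 15 * Lf v/(16 * v^7)"

lemma k_pos: "v > 1/2 \<Longrightarrow> 4 * v^2 - 1 > (0::real)"
proof -
  assume "v > 1/2"
  hence "v * v > (1/2) * (1/2)" by (intro mult_strict_mono) auto
  thus ?thesis by (simp add: power2_eq_square)
qed

lemma Lf_deriv:
  assumes "v > 1/2"
  shows "(Lf has_real_derivative (-4/(4 * v^2 - 1))) (at v)"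
proof -
  have p: "2 * v + 1 > 0" "2 * v - 1 > 0" using assms by auto
  have k: "4 * v^2 - 1 \<noteq> 0" using k_pos[OF assms] by simp
  have "(Lf has_real_derivative (2/(2 * v + 1) - 2/(2 * v - 1))) (at v)"
    unfolding Lf_def[abs_def] using p
    by (auto intro!: derivative_eq_intros simp: field_simps)
  moreover have "2/(2 * v + 1) - 2/(2 * v - 1) = -4/(4 * v^2 - 1)"
    using p k by (simp add: field_simps power2_eq_square)
  ultimately show ?thesis by simp
qed

lemma Lf_pos: "v > 1/2 \<Longrightarrow> Lf v > 0"
  unfolding Lf_def by simp

definition kf :: "real \<Rightarrow> real" where "kf v = 4 * v^2 - 1"

lemma DERIV_eqI: "(f has_real_derivative X) F \<Longrightarrow> X = Y \<Longrightarrow> (f has_real_derivative Y) F" by simp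

lemma Qf_k: "Qf v = 1/(v^2 * kf v) + Lf v/(4 * v^3)" unfolding Qf_def kf_def ..
lemma Q1f_k: "Q1f v = - (20 * v^2 - 3)/(2 * v^4 * (kf v)^2) - 3 * Lf v/(8 * v^5)" unfolding Q1f_def kf_def ..
lemma Q2f_k: "Q2f v = (240 * v^4 - 68 * v^2 + 6)/(2 * v^6 * (kf v)^3) + 3/(4 * v^6 * kf v) + 15 * Lf v/(16 * v^7)"
  unfolding Q2f_def kf_def ..

lemma kf_deriv: "(kf has_real_derivative 8 * v) (at v)"
  unfolding kf_def[abs_def] by (auto intro!: derivative_eq_intros)

lemma Lf_deriv_k: "v > 1/2 \<Longrightarrow> (Lf has_real_derivative (-4/kf v)) (at v)"
  unfolding kf_def by (rule Lf_deriv)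

lemma Pf_deriv:
  assumes "v > 1/2"
  shows "(Pf has_real_derivative 2 * v * Qf v) (at v)"
proof -
  have k: "kf v \<noteq> 0" using k_pos[OF assms] kf_def by simp
  have v: "v \<noteq> 0" using assms by simp
  show ?thesis unfolding Pf_def[abs_def]
    apply (rule DERIV_eqI[OF DERIV_divide[OF DERIV_minus[OF Lf_deriv_k[OF assms]] DERIV_cmult_Id]])
    using v apply simp
    unfolding Qf_k using k v apply (simp add: field_simps)
    by algebra
qed

lemma kf_deriv': "D = 8 * v \<Longrightarrow> (kf has_real_derivative D) (at v within s)"
  unfolding kf_def[abs_def] by (auto intro!: derivative_eq_intros)

lemma Lf_deriv': "v > 1/2 \<Longrightarrow> D = -4/kf v \<Longrightarrow> (Lf has_real_derivative D) (at v within s)"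
  using Lf_deriv_k has_field_derivative_at_within by blast

lemma Qf_fun: "Qf = (\<lambda>v. 1/(v^2 * kf v) + Lf v/(4 * v^3))" using Qf_k by (intro ext) 
lemma Q1f_fun: "Q1f = (\<lambda>v. - (20 * v^2 - 3)/(2 * v^4 * (kf v)^2) - 3 * Lf v/(8 * v^5))" using Q1f_k by (intro ext)

lemma Qf_deriv:
  assumes "v > 1/2"
  shows "(Qf has_real_derivative 2 * v * Q1f v) (at v)"
proof -
  have k: "kf v \<noteq> 0" using k_pos[OF assms] kf_def by simp
  have v: "v \<noteq> 0" using assms by simp
  show ?thesis unfolding Qf_fun
    apply (auto intro!: derivative_eq_intros kf_deriv' Lf_deriv' assms simp: k v)
    unfolding Q1f_k using k v apply (simp add: field_simps)
    unfolding kf_def by algebra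
qed

lemma Q1f_deriv:
  assumes "v > 1/2"
  shows "(Q1f has_real_derivative 2 * v * Q2f v) (at v)"
proof -
  have k: "kf v \<noteq> 0" using k_pos[OF assms] kf_def by simp
  have v: "v \<noteq> 0" using assms by simp
  show ?thesis unfolding Q1f_fun
    apply (auto intro!: derivative_eq_intros kf_deriv' Lf_deriv' assms simp: k v)
    unfolding Q2f_k using k v apply (simp add: field_simps)
    unfolding kf_def by algebra
qed

lemma open_U: "open {y::real^3. 1/4 < Dq y}"
  by (rule open_Collect_less) (auto simp: Dq_def intro!: continuous_intros)

lemma pd_local:
  assumes "\<And>y. 1/4 < Dq y \<Longrightarrow> f y = F y" "1/4 < Dq x"
    "((\<lambda>t. F (x + t *\<^sub>R axis i 1)) has_real_derivative d) (at 0)"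
  shows "pd f i x = d"
proof -
  let ?S = "(\<lambda>t::real. x + t *\<^sub>R axis i 1) -` {y. 1/4 < Dq y}"
  have o: "open ?S" by (rule continuous_open_vimage[OF open_U]) (intro continuous_intros)
  have z: "0 \<in> ?S" using assms by simp
  have "((\<lambda>t. f (x + t *\<^sub>R axis i 1)) has_real_derivative d) (at 0)"
    by (rule has_field_derivative_transform_within_open[OF assms(3) o z]) (simp add: assms(1))
  thus ?thesis unfolding pd_def by (rule DERIV_imp_deriv)
qed

lemma line_comp: "(x + t *\<^sub>R axis m 1)$k = x$k + t * dl m k"
  by (simp add: axis_def dl_def)

lemma Dq_line: "Dq (x + t *\<^sub>R axis m 1) = Dq x + t * uu x m + t^2 * (eta m m / 2)"
  using exhaust_3[of m] by (auto simp: Dq_def uu_def eta_def axis_def algebra_simps power2_eq_square)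

lemma uu_line: "uu (x + t *\<^sub>R axis m 1) i = uu x i + t * eta m i"
  using exhaust_3[of m] exhaust_3[of i] by (auto simp: uu_def eta_def axis_def)

lemma nu_line:
  assumes "1/4 < Dq x" and "(\<phi> has_real_derivative 2 * nu x * \<phi>D) (at (nu x))"
  shows "((\<lambda>t. \<phi> (nu (x + t *\<^sub>R axis m 1))) has_real_derivative \<phi>D * uu x m) (at 0)"
proof -
  have D0: "Dq x > 0" using assms by simp
  have n0: "nu x > 0" unfolding nu_def using D0 by simp
  have g: "((\<lambda>t. Dq x + t * uu x m + t^2 * (eta m m / 2)) has_real_derivative uu x m) (at 0)"
    by (auto intro!: derivative_eq_intros)
  have s: "((\<lambda>t. sqrt (Dq x + t * uu x m + t^2 * (eta m m / 2))) has_real_derivative (inverse (sqrt (Dq x + 0 * uu x m + 0^2 * (eta m m / 2))) / 2) * uu x m) (at 0)"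
    using DERIV_chain2[OF DERIV_real_sqrt g] D0 by simp
  hence s': "((\<lambda>t. nu (x + t *\<^sub>R axis m 1)) has_real_derivative (inverse (nu x) / 2) * uu x m) (at 0)"
    unfolding nu_def Dq_line by simp
  have a2: "(\<phi> has_real_derivative 2 * nu x * \<phi>D) (at (nu (x + 0 *\<^sub>R axis m 1)))" using assms(2) by simp
  have "((\<lambda>t. \<phi> (nu (x + t *\<^sub>R axis m 1))) has_real_derivative 2 * nu x * \<phi>D * ((inverse (nu x) / 2) * uu x m)) (at 0)"
    by (rule DERIV_chain2[OF a2 s'])
  thus ?thesis using n0 by (simp add: field_simps)
qed

lemma nu_gt: "1/4 < Dq x \<Longrightarrow> nu x > 1/2"
  unfolding nu_def by (intro real_less_rsqrt) (simp add: power2_eq_square)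

definition dG :: "real^3 \<Rightarrow> 3 \<Rightarrow> 3 \<Rightarrow> 3 \<Rightarrow> real" where
  "dG x m i j = Qf (nu x) * (uu x m * eta i j + eta m i * uu x j + uu x i * eta m j) + Q1f (nu x) * uu x m * uu x i * uu x j"

lemma pd_gco:
  assumes D: "1/4 < Dq x"
  shows "pd (\<lambda>y. gco y i j) m x = dG x m i j"
proof (rule pd_local[where F = "\<lambda>y. Pf (nu y) * eta i j + Qf (nu y) * uu y i * uu y j"])
  show "\<And>y. 1/4 < Dq y \<Longrightarrow> gco y i j = Pf (nu y) * eta i j + Qf (nu y) * uu y i * uu y j"
    by (rule gco_closed)
  show "1/4 < Dq x" by fact
  have hP: "((\<lambda>t. Pf (nu (x + t *\<^sub>R axis m 1))) has_real_derivative Qf (nu x) * uu x m) (at 0)"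
    by (rule nu_line[OF D Pf_deriv[OF nu_gt[OF D]]])
  have hQ: "((\<lambda>t. Qf (nu (x + t *\<^sub>R axis m 1))) has_real_derivative Q1f (nu x) * uu x m) (at 0)"
    by (rule nu_line[OF D Qf_deriv[OF nu_gt[OF D]]])
  have li: "((\<lambda>t. uu x i + t * eta m i) has_real_derivative eta m i) (at 0)" for i
    by (auto intro!: derivative_eq_intros)
  have "((\<lambda>t. Pf (nu (x + t *\<^sub>R axis m 1)) * eta i j + Qf (nu (x + t *\<^sub>R axis m 1)) * (uu x i + t * eta m i) * (uu x j + t * eta m j))
     has_real_derivative dG x m i j) (at 0)"
    apply (rule DERIV_eqI[OF DERIV_add[OF DERIV_mult[OF hP DERIV_const] DERIV_mult[OF DERIV_mult[OF hQ li] li]]])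
    by (simp add: dG_def algebra_simps)
  thus "((\<lambda>t. Pf (nu (x + t *\<^sub>R axis m 1)) * eta i j + Qf (nu (x + t *\<^sub>R axis m 1)) * uu (x + t *\<^sub>R axis m 1) i * uu (x + t *\<^sub>R axis m 1) j) has_real_derivative dG x m i j) (at 0)"
    unfolding uu_line .
qed

definition pif :: "real \<Rightarrow> real" where "pif v = 1 / Pf v"
definition rhof :: "real \<Rightarrow> real" where "rhof v = kf v / 2"

lemma Pf_neg: "v > 1/2 \<Longrightarrow> Pf v < 0"
  unfolding Pf_def using Lf_pos[of v] by (simp add: field_simps)

lemma PQ_rel: "v > 1/2 \<Longrightarrow> rhof v * (Pf v + 2 * v^2 * Qf v) = 1"
proof -
  assume a: "v > 1/2"
  have k: "kf v \<noteq> 0" using k_pos[OF a] kf_def by simp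
  have v: "v \<noteq> 0" using a by simp
  show ?thesis unfolding rhof_def Pf_def Qf_k using k v by (simp add: field_simps power2_eq_square power3_eq_cube)
qed

lemma inv_generic:
  assumes "\<pi> * P = 1" "\<rho> * (P + 2 * Dq x * Q) = 1"
  shows "matrix_inv (\<chi> i j. P * eta i j + Q * uu x i * uu x j) = (\<chi> k l. \<pi> * etai k l - Q * \<pi> * \<rho> * x$k * x$l)"
proof (rule matrix_inv_eq)
  have a2: "\<rho> * (P + 2 * (x$1 * x$3 - (x$2)^2) * Q) = 1" using assms(2) unfolding Dq_def .
  show "(\<chi> i j. P * eta i j + Q * uu x i * uu x j) ** (\<chi> k l. \<pi> * etai k l - Q * \<pi> * \<rho> * x$k * x$l) = mat 1"
    unfolding vec_eq_iff forall_3 matrix_matrix_mult_def sum_3 mat_def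
    using assms(1) a2 by (simp add: eta_def etai_def uu_def; algebra)
  show "(\<chi> k l. \<pi> * etai k l - Q * \<pi> * \<rho> * x$k * x$l) ** (\<chi> i j. P * eta i j + Q * uu x i * uu x j) = mat 1"
    unfolding vec_eq_iff forall_3 matrix_matrix_mult_def sum_3 mat_def
    using assms(1) a2 by (simp add: eta_def etai_def uu_def; algebra)
qed

definition GI :: "real^3 \<Rightarrow> 3 \<Rightarrow> 3 \<Rightarrow> real" where
  "GI x k l = pif (nu x) * etai k l - Qf (nu x) * pif (nu x) * rhof (nu x) * x$k * x$l"

lemma ginv_closed:
  assumes D: "1/4 < Dq x"
  shows "ginv x $ k $ l = GI x k l"
proof -
  have v: "nu x > 1/2" by (rule nu_gt[OF D])
  have n2: "(nu x)^2 = Dq x" unfolding nu_def using D by simp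
  have g: "(\<chi> i j. gco x i j) = (\<chi> i j. Pf (nu x) * eta i j + Qf (nu x) * uu x i * uu x j)"
    using gco_closed[OF D] by simp
  have p: "pif (nu x) * Pf (nu x) = 1" unfolding pif_def using Pf_neg[OF v] by simp
  have r: "rhof (nu x) * (Pf (nu x) + 2 * Dq x * Qf (nu x)) = 1" using PQ_rel[OF v] n2 by simp
  show ?thesis unfolding ginv_def g inv_generic[OF p r] GI_def by simp
qed

definition af :: "real \<Rightarrow> real" where "af v = pif v * Qf v / 2"
definition bf :: "real \<Rightarrow> real" where "bf v = pif v * Q1f v / 2 - Qf v * pif v * rhof v * (Qf v + v^2 * Q1f v)"
definition ef :: "real \<Rightarrow> real" where "ef v = Qf v * rhof v / 2"

definition ChrF :: "real^3 \<Rightarrow> 3 \<Rightarrow> 3 \<Rightarrow> 3 \<Rightarrow> real" where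
  "ChrF x k i j = af (nu x) * (uu x i * dl j k + uu x j * dl i k) + x$k * (bf (nu x) * uu x i * uu x j + ef (nu x) * eta i j)"

lemma chr_generic:
  fixes \<pi> \<rho> Q Q1 :: real and x :: "real^3" and k i j :: 3
  defines "dGg \<equiv> \<lambda>m i j. Q * (uu x m * eta i j + eta m i * uu x j + uu x i * eta m j) + Q1 * uu x m * uu x i * uu x j"
  shows "(1/2) * (\<Sum>l\<in>UNIV. (\<pi> * etai k l - Q * \<pi> * \<rho> * x$k * x$l) * (dGg i j l + dGg j i l - dGg l i j))
    = (\<pi> * Q / 2) * (uu x i * dl j k + uu x j * dl i k) + x$k * ((\<pi> * Q1 / 2 - Q * \<pi> * \<rho> * (Q + Dq x * Q1)) * uu x i * uu x j + (\<pi> * Q / 2 - \<pi> * \<rho> * Dq x * Q^2) * eta i j)"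
  unfolding dGg_def sum_3
  using exhaust_3[of k] exhaust_3[of i] exhaust_3[of j]
  apply (elim disjE)
  apply (simp_all add: eta_def etai_def uu_def dl_def Dq_def)
  apply (simp_all add: algebra_simps power2_eq_square)
  done

lemma Chr_closed:
  assumes D: "1/4 < Dq x"
  shows "Chr x k i j = ChrF x k i j"
proof -
  define v where "v = nu x"
  have vg: "v > 1/2" unfolding v_def by (rule nu_gt[OF D])
  have n2: "Dq x = v^2" unfolding v_def nu_def using D by simp
  have p: "pif v * Pf v = 1" unfolding pif_def using Pf_neg[OF vg] by simp
  have r: "rhof v * (Pf v + 2 * v^2 * Qf v) = 1" using PQ_rel[OF vg] by simp
  have e: "pif v * Qf v / 2 - pif v * rhof v * Dq x * (Qf v)^2 = ef v"
  proof -
    have "pif v * Qf v / 2 - pif v * rhof v * v^2 * (Qf v)^2 - Qf v * rhof v / 2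
        = (Qf v / 2) * (rhof v * (pif v * Pf v - 1) + pif v * (1 - rhof v * (Pf v + 2 * v^2 * Qf v)))"
      by (simp add: algebra_simps power2_eq_square)
    also have "\<dots> = 0" using p r by simp
    finally show ?thesis unfolding ef_def n2 by simp
  qed
  have b: "pif v * Q1f v / 2 - Qf v * pif v * rhof v * (Qf v + Dq x * Q1f v) = bf v"
    unfolding bf_def n2 ..
  have "Chr x k i j = (1/2) * (\<Sum>l\<in>UNIV. (pif v * etai k l - Qf v * pif v * rhof v * x$k * x$l) *
       ((Qf v * (uu x i * eta j l + eta i j * uu x l + uu x j * eta i l) + Q1f v * uu x i * uu x j * uu x l)
      + (Qf v * (uu x j * eta i l + eta j i * uu x l + uu x i * eta j l) + Q1f v * uu x j * uu x i * uu x l)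
      - (Qf v * (uu x l * eta i j + eta l i * uu x j + uu x i * eta l j) + Q1f v * uu x l * uu x i * uu x j)))"
    unfolding Chr_def ginv_closed[OF D] pd_gco[OF D] GI_def dG_def v_def ..
  also have "\<dots> = ChrF x k i j"
    unfolding chr_generic ChrF_def e b af_def v_def[symmetric] ..
  finally show ?thesis .
qed

lemma Pf_deriv': "v > 1/2 \<Longrightarrow> D = 2 * v * Qf v \<Longrightarrow> (Pf has_real_derivative D) (at v within s)"
  using Pf_deriv has_field_derivative_at_within by blast
lemma Qf_deriv': "v > 1/2 \<Longrightarrow> D = 2 * v * Q1f v \<Longrightarrow> (Qf has_real_derivative D) (at v within s)"
  using Qf_deriv has_field_derivative_at_within by blast
lemma Q1f_deriv': "v > 1/2 \<Longrightarrow> D = 2 * v * Q2f v \<Longrightarrow> (Q1f has_real_derivative D) (at v within s)"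
  using Q1f_deriv has_field_derivative_at_within by blast
lemma rhof_deriv': "D = 2 * v * 2 \<Longrightarrow> (rhof has_real_derivative D) (at v within s)"
  unfolding rhof_def[abs_def] kf_def by (auto intro!: derivative_eq_intros)

lemma pif_deriv': 
  assumes "v > 1/2" "D = 2 * v * (- Qf v * (pif v)^2)"
  shows "(pif has_real_derivative D) (at v within s)"
proof -
  have p: "Pf v \<noteq> 0" using Pf_neg[OF assms(1)] by simp
  show ?thesis unfolding assms(2) pif_def[abs_def] using p assms(1)
    by (auto intro!: derivative_eq_intros Pf_deriv' simp: field_simps power2_eq_square)
qed

definition aD :: "real \<Rightarrow> real" where "aD v = (- ((Qf v)^2 * (pif v)^2) + pif v * Q1f v) / 2"
definition eD :: "real \<Rightarrow> real" where "eD v = Q1f v * rhof v / 2 + Qf v"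
definition bD :: "real \<Rightarrow> real" where
  "bD v = (- Qf v * (pif v)^2 * Q1f v + pif v * Q2f v) / 2
     - (Q1f v * pif v * rhof v * (Qf v + v^2 * Q1f v) + Qf v * (- Qf v * (pif v)^2) * rhof v * (Qf v + v^2 * Q1f v)
        + Qf v * pif v * 2 * (Qf v + v^2 * Q1f v) + Qf v * pif v * rhof v * (2 * Q1f v + v^2 * Q2f v))"

lemma af_deriv: "v > 1/2 \<Longrightarrow> (af has_real_derivative 2 * v * aD v) (at v)"
  unfolding af_def[abs_def]
  apply (auto intro!: derivative_eq_intros pif_deriv' Qf_deriv')
  by (simp add: aD_def algebra_simps power2_eq_square)

lemma ef_deriv: "v > 1/2 \<Longrightarrow> (ef has_real_derivative 2 * v * eD v) (at v)"
  unfolding ef_def[abs_def]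
  apply (auto intro!: derivative_eq_intros rhof_deriv' Qf_deriv')
  by (simp add: eD_def algebra_simps power2_eq_square)

lemma bf_deriv: "v > 1/2 \<Longrightarrow> (bf has_real_derivative 2 * v * bD v) (at v)"
  unfolding bf_def[abs_def]
  apply (auto intro!: derivative_eq_intros rhof_deriv' Qf_deriv' Q1f_deriv' pif_deriv')
  apply (simp add: bD_def algebra_simps power2_eq_square)
  by (simp add: field_simps)

definition dChr :: "real^3 \<Rightarrow> 3 \<Rightarrow> 3 \<Rightarrow> 3 \<Rightarrow> 3 \<Rightarrow> real" where
  "dChr x m k i j = aD (nu x) * uu x m * (uu x i * dl j k + uu x j * dl i k)
     + af (nu x) * (eta m i * dl j k + eta m j * dl i k)
     + dl m k * (bf (nu x) * uu x i * uu x j + ef (nu x) * eta i j)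
     + x$k * (bD (nu x) * uu x m * uu x i * uu x j + bf (nu x) * (eta m i * uu x j + uu x i * eta m j) + eD (nu x) * uu x m * eta i j)"

lemma pd_Chr:
  assumes D: "1/4 < Dq x"
  shows "pd (\<lambda>y. Chr y k i j) m x = dChr x m k i j"
proof (rule pd_local[where F = "\<lambda>y. ChrF y k i j"])
  show "\<And>y. 1/4 < Dq y \<Longrightarrow> Chr y k i j = ChrF y k i j" by (rule Chr_closed)
  show "1/4 < Dq x" by fact
  have hA: "\<And>d. d = aD (nu x) * uu x m \<Longrightarrow> ((\<lambda>t. af (nu (x + t *\<^sub>R axis m 1))) has_real_derivative d) (at 0)"
    using nu_line[OF D af_deriv[OF nu_gt[OF D]]] by simp
  have hB: "\<And>d. d = bD (nu x) * uu x m \<Longrightarrow> ((\<lambda>t. bf (nu (x + t *\<^sub>R axis m 1))) has_real_derivative d) (at 0)"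
    using nu_line[OF D bf_deriv[OF nu_gt[OF D]]] by simp
  have hE: "\<And>d. d = eD (nu x) * uu x m \<Longrightarrow> ((\<lambda>t. ef (nu (x + t *\<^sub>R axis m 1))) has_real_derivative d) (at 0)"
    using nu_line[OF D ef_deriv[OF nu_gt[OF D]]] by simp
  have "((\<lambda>t. af (nu (x + t *\<^sub>R axis m 1)) * ((uu x i + t * eta m i) * dl j k + (uu x j + t * eta m j) * dl i k)
      + (x$k + t * dl m k) * (bf (nu (x + t *\<^sub>R axis m 1)) * (uu x i + t * eta m i) * (uu x j + t * eta m j)
      + ef (nu (x + t *\<^sub>R axis m 1)) * eta i j)) has_real_derivative dChr x m k i j) (at 0)"
    apply (auto intro!: derivative_eq_intros hA hB hE)
    by (simp add: dChr_def algebra_simps)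
  thus "((\<lambda>t. ChrF (x + t *\<^sub>R axis m 1) k i j) has_real_derivative dChr x m k i j) (at 0)"
    unfolding ChrF_def uu_line line_comp .
qed

definition Cg :: "real \<Rightarrow> real \<Rightarrow> real \<Rightarrow> real^3 \<Rightarrow> 3 \<Rightarrow> 3 \<Rightarrow> 3 \<Rightarrow> real" where
  "Cg a b e x k i j = a * (uu x i * dl j k + uu x j * dl i k) + x$k * (b * uu x i * uu x j + e * eta i j)"

definition dCg :: "real \<Rightarrow> real \<Rightarrow> real \<Rightarrow> real \<Rightarrow> real \<Rightarrow> real \<Rightarrow> real^3 \<Rightarrow> 3 \<Rightarrow> 3 \<Rightarrow> 3 \<Rightarrow> 3 \<Rightarrow> real" where
  "dCg a b e A B E x m k i j = A * uu x m * (uu x i * dl j k + uu x j * dl i k)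
     + a * (eta m i * dl j k + eta m j * dl i k)
     + dl m k * (b * uu x i * uu x j + e * eta i j)
     + x$k * (B * uu x m * uu x i * uu x j + b * (eta m i * uu x j + uu x i * eta m j) + E * uu x m * eta i j)"

definition alpha :: "real \<Rightarrow> real \<Rightarrow> real \<Rightarrow> real \<Rightarrow> real \<Rightarrow> real \<Rightarrow> real \<Rightarrow> real" where
  "alpha D a b e A B E = 2 * A + 5 * b + 2 * D * B - (4 * A + 2 * b + 2 * D * B + E)
     + (4 * a + 2 * D * b + e) * (2 * a + 2 * D * b)
     - (6 * a^2 + 8 * D * a * b + 2 * a * e + 4 * D^2 * b^2 + 4 * D * b * e + e^2)"

definition beta :: "real \<Rightarrow> real \<Rightarrow> real \<Rightarrow> real \<Rightarrow> real \<Rightarrow> real \<Rightarrow> real \<Rightarrow> real" where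
  "beta D a b e A B E = 2 * a + 3 * e + 2 * D * E - (4 * a + 2 * D * b + e) + 2 * D * (4 * a + 2 * D * b + e) * e - 4 * D * a * e"

lemma ric_generic:
  "(\<Sum>r\<in>UNIV. dCg a b e A B E x r r n s - dCg a b e A B E x n r r s
      + (\<Sum>l\<in>UNIV. Cg a b e x r r l * Cg a b e x l n s - Cg a b e x r n l * Cg a b e x l r s))
   = alpha (Dq x) a b e A B E * uu x s * uu x n + beta (Dq x) a b e A B E * eta s n"
  unfolding sum_3
  using exhaust_3[of s] exhaust_3[of n]
  apply (elim disjE)
  apply (simp_all add: Cg_def dCg_def alpha_def beta_def eta_def uu_def dl_def Dq_def)
  apply (simp_all add: algebra_simps power2_eq_square)
  done

definition Hf :: "real \<Rightarrow> real" where
  "Hf v = -2 + kf v/(8 * v^2) - 1/(v * Lf v) - 2/(kf v * v * Lf v) + 2/(kf v * (Lf v)^2)"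

lemma pif_cf: "v > 1/2 \<Longrightarrow> pif v = - 2 * v / Lf v"
  unfolding pif_def Pf_def using Lf_pos[of v] by simp

lemma alpha_simp: "alpha D a b e A B E = -2 * A + 3 * b - E + 2 * a^2 + 4 * D * a * b - 2 * D * b * e - e^2"
  unfolding alpha_def by (simp add: algebra_simps power2_eq_square)

lemma beta_simp: "beta D a b e A B E = -2 * a + 2 * e + 2 * D * E - 2 * D * b + 4 * D * a * e + 4 * D^2 * b * e + 2 * D * e^2"
  unfolding beta_def by (simp add: algebra_simps power2_eq_square)

lemma nzs: assumes "v > 1/2" shows "kf v \<noteq> 0" "Lf v \<noteq> 0" "v \<noteq> 0"
  using k_pos[OF assms] kf_def Lf_pos[OF assms] assms by auto

lemma a_cf:
  assumes v: "v > 1/2"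
  shows "af v = (- (v^2 * Lf v) - v + (1/4) * Lf v) / (v^2 * kf v * Lf v)"
  unfolding af_def pif_cf[OF v] Qf_k
  using nzs[OF v] apply (simp add: field_simps)
  unfolding kf_def by algebra

lemma e_cf:
  assumes v: "v > 1/2"
  shows "ef v = ((1/4) * v^2 * Lf v + (1/4) * v - (1/16) * Lf v) / (v^3)"
  unfolding ef_def rhof_def Qf_k
  using nzs[OF v] apply (simp add: field_simps)
  unfolding kf_def by algebra

lemma b_cf:
  assumes v: "v > 1/2"
  shows "bf v = (- ((1/2) * v^4 * (Lf v)^2) - (1/2) * v^3 * Lf v + (1/4) * v^2 * (Lf v)^2 + v^2 - (1/8) * v * Lf v - (1/32) * (Lf v)^2) / (v^5 * kf v * Lf v)"
  unfolding bf_def pif_cf[OF v] rhof_def Qf_k Q1f_k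
  using nzs[OF v] apply (simp add: field_simps)
  unfolding kf_def by algebra

lemma aD_cf:
  assumes v: "v > 1/2"
  shows "aD v = (4 * v^4 * (Lf v)^2 + 6 * v^3 * Lf v - 2 * v^2 * (Lf v)^2 - 2 * v^2 - (1/2) * v * Lf v + (1/4) * (Lf v)^2) / (v^4 * (kf v)^2 * (Lf v)^2)"
  unfolding aD_def pif_cf[OF v] Qf_k Q1f_k
  using nzs[OF v] apply (simp add: field_simps)
  unfolding kf_def by algebra

lemma eD_cf:
  assumes v: "v > 1/2"
  shows "eD v = (- ((1/8) * v^2 * Lf v) - (3/8) * v + (3/32) * Lf v) / (v^5)"
  unfolding eD_def rhof_def Qf_k Q1f_k
  using nzs[OF v] apply (simp add: field_simps)
  unfolding kf_def by algebra

lemma alpha_cf: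
  assumes v: "v > 1/2"
  shows "alpha (v^2) (af v) (bf v) (ef v) (aD v) (bD v) (eD v) = (- (2 * v^5 * (Lf v)^3) - 4 * v^4 * (Lf v)^2 + v^3 * (Lf v)^3 + (1/2) * v^2 * (Lf v)^2 + 2 * v^2 - (1/8) * v * (Lf v)^3 - v * Lf v + (1/8) * (Lf v)^2) / (v^4 * (kf v)^2 * (Lf v)^2)"
  unfolding alpha_simp a_cf[OF v] b_cf[OF v] e_cf[OF v] aD_cf[OF v] eD_cf[OF v]
  using nzs[OF v] apply (simp add: field_simps)
  unfolding kf_def by algebra

lemma beta_cf:
  assumes v: "v > 1/2"
  shows "beta (v^2) (af v) (bf v) (ef v) (aD v) (bD v) (eD v) = (v^2 * Lf v + v - (1/4) * Lf v) / (v * kf v)"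
  unfolding beta_simp a_cf[OF v] b_cf[OF v] e_cf[OF v] eD_cf[OF v]
  using nzs[OF v] apply (simp add: field_simps)
  unfolding kf_def by algebra

lemma u_cf:
  assumes v: "v > 1/2"
  shows "2 * v^2 * pif v - 4 * (v^2)^2 * Qf v * pif v * rhof v = (4 * v^4 - v^2)"
  unfolding pif_cf[OF v] rhof_def Qf_k
  using nzs[OF v] apply (simp add: field_simps)
  unfolding kf_def by algebra

lemma t_cf:
  assumes v: "v > 1/2"
  shows "3 * pif v - 2 * v^2 * Qf v * pif v * rhof v = (2 * v^2 * Lf v - 4 * v - (1/2) * Lf v) / (Lf v)"
  unfolding pif_cf[OF v] rhof_def Qf_k
  using nzs[OF v] apply (simp add: field_simps)
  unfolding kf_def by algebra

lemma final_cf: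
  assumes v: "v > 1/2"
  shows "alpha (v^2) (af v) (bf v) (ef v) (aD v) (bD v) (eD v) * (2 * v^2 * pif v - 4 * (v^2)^2 * Qf v * pif v * rhof v) + beta (v^2) (af v) (bf v) (ef v) (aD v) (bD v) (eD v) * (3 * pif v - 2 * v^2 * Qf v * pif v * rhof v) = Hf v"
  unfolding alpha_cf[OF v] beta_cf[OF v] u_cf[OF v] t_cf[OF v] Hf_def
  using nzs[OF v] apply (simp add: field_simps)
  unfolding kf_def by algebra

definition HD :: "real \<Rightarrow> real" where
  "HD v = 1/(4 * v^3) + (Lf v - 4 * v / kf v)/(v^2 * (Lf v)^2) + 2 * (8 * v^2 * Lf v + kf v * Lf v - 4 * v)/((kf v)^2 * v^2 * (Lf v)^2)
     - 16 * (v * Lf v - 1)/((kf v)^2 * (Lf v)^3)"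

lemma Hf_deriv:
  assumes v: "v > 1/2"
  shows "(Hf has_real_derivative HD v) (at v)"
  unfolding Hf_def[abs_def]
  using nzs[OF v] v
  apply (auto intro!: derivative_eq_intros kf_deriv' Lf_deriv')
  unfolding HD_def
  apply (simp add: field_simps)
  unfolding kf_def by algebra

lemma HD_pos:
  assumes v: "v > 1/2"
  shows "HD v > 0"
proof -
  define k where "k = kf v"
  define L where "L = Lf v"
  have k0: "k > 0" unfolding k_def kf_def using k_pos[OF v] .
  have L0: "L > 0" unfolding L_def using Lf_pos[OF v] .
  have v0: "v > 0" using v by simp
  define A2 where "A2 = 4 * v * k^2 + 64 * v^3 + 8 * v * k"
  define A1 where "A1 = 16 * v^2 * k + 32 * v^2 + 64 * v^4"
  define A0 where "A0 = 64 * v^3"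
  have A2: "A2 > 0" unfolding A2_def using v0 k0 by (simp add: add_pos_pos)
  have k4: "k = 4 * v^2 - 1" unfolding k_def kf_def ..
  have key0: "4 * A2 * A0 - A1^2 = 256 * v^4 * (48 * v^2 - 5)"
    unfolding A2_def A1_def A0_def k4 by algebra
  have key1: "4 * A2 * (A2 * L^2 - A1 * L + A0) = (2 * A2 * L - A1)^2 + (4 * A2 * A0 - A1^2)"
    by algebra
  have key: "4 * A2 * (A2 * L^2 - A1 * L + A0) = (2 * A2 * L - A1)^2 + 256 * v^4 * (48 * v^2 - 5)"
    using key0 key1 by simp
  have "v * v > (1/2) * (1/2)" using v by (intro mult_strict_mono) auto
  hence "v^2 > 1/4" by (simp add: power2_eq_square)
  hence "48 * v^2 - 5 > 0" by simp
  hence "256 * v^4 * (48 * v^2 - 5) > 0" using v0 by simp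
  hence "(2 * A2 * L - A1)^2 + 256 * v^4 * (48 * v^2 - 5) > 0"
    by (simp add: add_nonneg_pos)
  hence "4 * A2 * (A2 * L^2 - A1 * L + A0) > 0" unfolding key .
  hence q: "A2 * L^2 - A1 * L + A0 > 0" using A2 by (simp add: zero_less_mult_iff)
  have N: "k^2 * L^3 + (A2 * L^2 - A1 * L + A0) > 0" using q k0 L0 by (simp add: add_pos_pos)
  have "HD v = (k^2 * L^3 + (A2 * L^2 - A1 * L + A0)) / (4 * v^3 * k^2 * L^3)"
    unfolding HD_def A2_def A1_def A0_def k_def[symmetric] L_def[symmetric]
    using k0 L0 v0 apply (simp add: field_simps)
    unfolding k_def kf_def by algebra
  thus ?thesis using N k0 L0 v0 by simp
qed

lemma Hf_strict: "1/2 < a \<Longrightarrow> a < b \<Longrightarrow> Hf a < Hf b"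
proof (rule DERIV_pos_imp_increasing[of a b Hf])
  fix x assume "1/2 < a" "a \<le> x"
  hence "x > 1/2" by simp
  thus "\<exists>y. DERIV Hf x :> y \<and> y > 0" using Hf_deriv HD_pos by blast
qed

definition Sf :: "real \<Rightarrow> real" where
  "Sf v = (v + 1/2) * log 2 (v + 1/2) - (v - 1/2) * log 2 (v - 1/2)"

lemma Sf_deriv:
  assumes v: "v > 1/2"
  shows "(Sf has_real_derivative log 2 (v + 1/2) - log 2 (v - 1/2)) (at v)"
  unfolding Sf_def[abs_def] using v
  by (auto intro!: derivative_eq_intros)

lemma Sf_strict: "1/2 < a \<Longrightarrow> a < b \<Longrightarrow> Sf a < Sf b"
proof (rule DERIV_pos_imp_increasing[of a b Sf])
  fix x assume "1/2 < a" "a \<le> x"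
  hence x: "x > 1/2" by simp
  have "log 2 (x - 1/2) < log 2 (x + 1/2)" using x by simp
  thus "\<exists>y. DERIV Sf x :> y \<and> y > 0" using Sf_deriv[OF x] by auto
qed

lemma Ric_closed:
  assumes D: "1/4 < Dq x"
  shows "Ric x s n = alpha (Dq x) (af (nu x)) (bf (nu x)) (ef (nu x)) (aD (nu x)) (bD (nu x)) (eD (nu x)) * uu x s * uu x n
     + beta (Dq x) (af (nu x)) (bf (nu x)) (ef (nu x)) (aD (nu x)) (bD (nu x)) (eD (nu x)) * eta s n"
proof -
  have c: "\<And>k i j. Chr x k i j = Cg (af (nu x)) (bf (nu x)) (ef (nu x)) x k i j"
    using Chr_closed[OF D] by (simp add: ChrF_def Cg_def)
  have d: "\<And>m k i j. pd (\<lambda>y. Chr y k i j) m x = dCg (af (nu x)) (bf (nu x)) (ef (nu x)) (aD (nu x)) (bD (nu x)) (eD (nu x)) x m k i j"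
    using pd_Chr[OF D] by (simp add: dChr_def dCg_def)
  show ?thesis unfolding Ric_def Riem_def d c by (rule ric_generic)
qed

lemma scal_generic:
  "(\<Sum>s\<in>UNIV. \<Sum>n\<in>UNIV. (\<pi> * etai s n - Q * \<pi> * \<rho> * x$s * x$n) * (\<alpha> * uu x s * uu x n + \<beta> * eta s n))
   = \<alpha> * (2 * Dq x * \<pi> - 4 * (Dq x)^2 * Q * \<pi> * \<rho>) + \<beta> * (3 * \<pi> - 2 * Dq x * Q * \<pi> * \<rho>)"
  unfolding sum_3 by (simp add: etai_def eta_def uu_def Dq_def algebra_simps power2_eq_square)

lemma scal_closed:
  assumes D: "1/4 < Dq x"
  shows "scal_coords x = Hf (nu x)"
proof -
  define v where "v = nu x"
  have vg: "v > 1/2" unfolding v_def by (rule nu_gt[OF D])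
  have n2: "Dq x = v^2" unfolding v_def nu_def using D by simp
  have "scal_coords x = (\<Sum>s\<in>UNIV. \<Sum>n\<in>UNIV. (pif v * etai s n - Qf v * pif v * rhof v * x$s * x$n) *
      (alpha (Dq x) (af v) (bf v) (ef v) (aD v) (bD v) (eD v) * uu x s * uu x n
     + beta (Dq x) (af v) (bf v) (ef v) (aD v) (bD v) (eD v) * eta s n))"
    unfolding scal_coords_def ginv_closed[OF D] Ric_closed[OF D] GI_def v_def ..
  also have "\<dots> = alpha (Dq x) (af v) (bf v) (ef v) (aD v) (bD v) (eD v) * (2 * Dq x * pif v - 4 * (Dq x)^2 * Qf v * pif v * rhof v)
     + beta (Dq x) (af v) (bf v) (ef v) (aD v) (bD v) (eD v) * (3 * pif v - 2 * Dq x * Qf v * pif v * rhof v)"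
    by (rule scal_generic)
  also have "\<dots> = Hf v" unfolding n2 by (rule final_cf[OF vg])
  finally show ?thesis unfolding v_def .
qed

lemma M1_D:
  assumes "V \<in> M1"
  shows "1/4 < Dq (coords_of_sym V)" "det V = Dq (coords_of_sym V)"
proof -
  define a where "a = V$1$1"
  define b where "b = V$1$2"
  define c where "c = V$2$2"
  have sym: "V$2$1 = b" using assms unfolding M1_def b_def
    by (metis (mono_tags, lifting) mem_Collect_eq transpose_def vec_lambda_beta)
  have pd: "pos_def_herm (\<chi> i j. complex_of_real (V$i$j) + (\<i>/2) * complex_of_real (Omega$i$j))"
    using assms unfolding M1_def by simp
  have q: "\<And>z::complex^2. z \<noteq> 0 \<Longrightarrow> Re (\<Sum>i\<in>UNIV. \<Sum>j\<in>UNIV. cnj (z$i) * (complex_of_real (V$i$j) + (\<i>/2) * complex_of_real (Omega$i$j)) * z$j) > 0"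
    using pd unfolding pos_def_herm_def Let_def by simp
  define z1 :: "complex^2" where "z1 = vector [1, 0]"
  have "z1 \<noteq> 0" unfolding z1_def by (metis vector_2(1) zero_index zero_neq_one)
  from q[OF this] have a0: "a > 0" unfolding z1_def a_def
    by (simp add: sum_2 Omega_def)
  define z2 :: "complex^2" where "z2 = vector [- (complex_of_real b + \<i>/2), complex_of_real a]"
  have "z2 \<noteq> 0" unfolding z2_def using a0 by (metis vector_2(2) zero_index of_real_eq_0_iff less_irrefl)
  from q[OF this] have "Re (\<Sum>i\<in>UNIV. \<Sum>j\<in>UNIV. cnj (z2$i) * (complex_of_real (V$i$j) + (\<i>/2) * complex_of_real (Omega$i$j)) * z2$j) > 0" .
  hence "a * (a * c - b^2 - 1/4) > 0" unfolding z2_def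
    by (simp add: sum_2 Omega_def sym a_def[symmetric] b_def[symmetric] c_def[symmetric] algebra_simps power2_eq_square)
  hence "a * c - b^2 - 1/4 > 0" using a0 by (simp add: zero_less_mult_iff)
  thus "1/4 < Dq (coords_of_sym V)" unfolding Dq_def coords_of_sym_def a_def b_def c_def by simp
  show "det V = Dq (coords_of_sym V)" unfolding det_2 Dq_def coords_of_sym_def sym
    by (simp add: b_def power2_eq_square)
qed

lemma strict_iff:
  fixes f g :: "real \<Rightarrow> real"
  assumes f: "\<And>a b. 1/2 < a \<Longrightarrow> a < b \<Longrightarrow> f a < f b"
    and g: "\<And>a b. 1/2 < a \<Longrightarrow> a < b \<Longrightarrow> g a < g b"
    and x: "1/2 < x" and y: "1/2 < y"
  shows "f y > f x \<longleftrightarrow> g y > g x"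
proof (cases "x < y")
  case True thus ?thesis using f[OF x True] g[OF x True] by simp
next
  case False
  hence "y < x \<or> y = x" by auto
  thus ?thesis
  proof
    assume yx: "y < x"
    show ?thesis using f[OF y yx] g[OF y yx] by simp
  qed simp
qed

theorem corollary1:
  assumes "V \<in> M1" and "V' \<in> M1"
  shows "Scal V' > Scal V \<longleftrightarrow> S_vN V' > S_vN V"
proof -
  have S: "Scal W = Hf (sqrt (det W))" and T: "S_vN W = Sf (sqrt (det W))" and G: "sqrt (det W) > 1/2"
    if "W \<in> M1" for W
  proof -
    show "Scal W = Hf (sqrt (det W))"
      unfolding Scal_def scal_closed[OF M1_D(1)[OF that]] nu_def M1_D(2)[OF that] ..
    show "S_vN W = Sf (sqrt (det W))" unfolding S_vN_def Sf_def Let_def ..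
    show "sqrt (det W) > 1/2" using nu_gt[OF M1_D(1)[OF that]] unfolding nu_def M1_D(2)[OF that] .
  qed
  show ?thesis unfolding S[OF assms(1)] S[OF assms(2)] T[OF assms(1)] T[OF assms(2)]
    by (rule strict_iff[OF Hf_strict Sf_strict G[OF assms(1)] G[OF assms(2)]])
qed

end
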